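(* Let $X$ be an SL-space with spatial part $Y$. Then $X$ is an algebraic L-space if and only if $Y$ is a compactly based sober space.
   Context: A Priestley space is a Stone space $X$ with a partial order such that clopen upsets separate points. An L-space is a Priestley space in which the downset of each clopen set is clopen and the closure of each open upset is open. ${\sf ClopUp}(X)$ is the set of clopen upsets. The spatial part of $X$ is $Y=\{y\in X\mid{\downarrow}y\text{ is clopen}\}$, topologized by declaring $V\subseteq Y$ open iff $V=U\cap Y$ for some $U\in{\sf ClopUp}(X)$. $X$ is an SL-space if $Y$ is dense in $X$. A Scott upset is a closed upset $F$ with $\min F\subseteq Y$; ${\sf ClopSUp}(X)$ is the set of clopen Scott upsets; $\mathrm{core}\,U=\bigcup\{V\in{\sf ClopSUp}(X)\mid V\subseteq U\}$. $X$ is an algebraic L-space if $\mathrm{core}\,U$ is dense in $U$ for each $U\in{\sf ClopUp}(X)$. A topological space is compactly based if it has a basis of compact open sets; it is sober if every irreducible closed set is the closure of a unique point. *)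

theory Defs
  imports "HOL-Analysis.Analysis"
begin

text \<open>A space X is given by a topology T on the carrier topspace T together with a
  binary relation le, intended as a partial order on topspace T.\<close>

definition clopen_in :: "'a topology \<Rightarrow> 'a set \<Rightarrow> bool" where
  "clopen_in T A \<longleftrightarrow> openin T A \<and> closedin T A"

definition stone_space :: "'a topology \<Rightarrow> bool" where
  "stone_space T \<longleftrightarrow> compact_space T \<and> Hausdorff_space T \<and>
     (\<forall>W x. openin T W \<and> x \<in> W \<longrightarrow> (\<exists>C. clopen_in T C \<and> x \<in> C \<and> C \<subseteq> W))"

definition partial_order_on_set :: "'a set \<Rightarrow> ('a \<Rightarrow> 'a \<Rightarrow> bool) \<Rightarrow> bool" where
  "partial_order_on_set S le \<longleftrightarrow>
     (\<forall>x\<in>S. le x x) \<and>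
     (\<forall>x\<in>S. \<forall>y\<in>S. le x y \<and> le y x \<longrightarrow> x = y) \<and>
     (\<forall>x\<in>S. \<forall>y\<in>S. \<forall>z\<in>S. le x y \<and> le y z \<longrightarrow> le x z)"

definition is_upset :: "'a topology \<Rightarrow> ('a \<Rightarrow> 'a \<Rightarrow> bool) \<Rightarrow> 'a set \<Rightarrow> bool" where
  "is_upset T le U \<longleftrightarrow> U \<subseteq> topspace T \<and>
     (\<forall>x\<in>U. \<forall>y\<in>topspace T. le x y \<longrightarrow> y \<in> U)"

definition down_set :: "'a topology \<Rightarrow> ('a \<Rightarrow> 'a \<Rightarrow> bool) \<Rightarrow> 'a set \<Rightarrow> 'a set" where
  "down_set T le A = {y \<in> topspace T. \<exists>x\<in>A. le y x}"

definition ClopUp :: "'a topology \<Rightarrow> ('a \<Rightarrow> 'a \<Rightarrow> bool) \<Rightarrow> 'a set set" where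
  "ClopUp T le = {U. clopen_in T U \<and> is_upset T le U}"

definition priestley_space :: "'a topology \<Rightarrow> ('a \<Rightarrow> 'a \<Rightarrow> bool) \<Rightarrow> bool" where
  "priestley_space T le \<longleftrightarrow> stone_space T \<and> partial_order_on_set (topspace T) le \<and>
     (\<forall>x\<in>topspace T. \<forall>y\<in>topspace T. \<not> le x y \<longrightarrow>
        (\<exists>U\<in>ClopUp T le. x \<in> U \<and> y \<notin> U))"

definition L_space :: "'a topology \<Rightarrow> ('a \<Rightarrow> 'a \<Rightarrow> bool) \<Rightarrow> bool" where
  "L_space T le \<longleftrightarrow> priestley_space T le \<and>
     (\<forall>C. clopen_in T C \<longrightarrow> clopen_in T (down_set T le C)) \<and>
     (\<forall>U. openin T U \<and> is_upset T le U \<longrightarrow> openin T (T closure_of U))"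

definition spatial_part :: "'a topology \<Rightarrow> ('a \<Rightarrow> 'a \<Rightarrow> bool) \<Rightarrow> 'a set" where
  "spatial_part T le = {y \<in> topspace T. clopen_in T (down_set T le {y})}"

text \<open>The topology on the spatial part: V is open iff V = U \<inter> Y for a clopen upset U.
  (That this family is a topology is part of the paper's setting for L-spaces.)\<close>

definition spatial_topology :: "'a topology \<Rightarrow> ('a \<Rightarrow> 'a \<Rightarrow> bool) \<Rightarrow> 'a topology" where
  "spatial_topology T le =
     topology (\<lambda>V. \<exists>U\<in>ClopUp T le. V = U \<inter> spatial_part T le)"

definition SL_space :: "'a topology \<Rightarrow> ('a \<Rightarrow> 'a \<Rightarrow> bool) \<Rightarrow> bool" where
  "SL_space T le \<longleftrightarrow> L_space T le \<and> T closure_of (spatial_part T le) = topspace T"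

definition minimal_elements :: "('a \<Rightarrow> 'a \<Rightarrow> bool) \<Rightarrow> 'a set \<Rightarrow> 'a set" where
  "minimal_elements le F = {x \<in> F. \<forall>y\<in>F. le y x \<longrightarrow> y = x}"

definition scott_upset :: "'a topology \<Rightarrow> ('a \<Rightarrow> 'a \<Rightarrow> bool) \<Rightarrow> 'a set \<Rightarrow> bool" where
  "scott_upset T le F \<longleftrightarrow> closedin T F \<and> is_upset T le F \<and>
     minimal_elements le F \<subseteq> spatial_part T le"

definition ClopSUp :: "'a topology \<Rightarrow> ('a \<Rightarrow> 'a \<Rightarrow> bool) \<Rightarrow> 'a set set" where
  "ClopSUp T le = {V. clopen_in T V \<and> scott_upset T le V}"

definition core :: "'a topology \<Rightarrow> ('a \<Rightarrow> 'a \<Rightarrow> bool) \<Rightarrow> 'a set \<Rightarrow> 'a set" where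
  "core T le U = \<Union>{V \<in> ClopSUp T le. V \<subseteq> U}"

definition algebraic_L_space :: "'a topology \<Rightarrow> ('a \<Rightarrow> 'a \<Rightarrow> bool) \<Rightarrow> bool" where
  "algebraic_L_space T le \<longleftrightarrow> L_space T le \<and>
     (\<forall>U\<in>ClopUp T le. U \<subseteq> T closure_of (core T le U))"

definition compactly_based :: "'a topology \<Rightarrow> bool" where
  "compactly_based S \<longleftrightarrow>
     (\<forall>W x. openin S W \<and> x \<in> W \<longrightarrow> (\<exists>K. openin S K \<and> compactin S K \<and> x \<in> K \<and> K \<subseteq> W))"

definition irreducible_closed :: "'a topology \<Rightarrow> 'a set \<Rightarrow> bool" where
  "irreducible_closed S A \<longleftrightarrow> closedin S A \<and> A \<noteq> {} \<and>
     (\<forall>B C. closedin S B \<and> closedin S C \<and> A = B \<union> C \<longrightarrow> A = B \<or> A = C)"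

definition sober_space :: "'a topology \<Rightarrow> bool" where
  "sober_space S \<longleftrightarrow>
     (\<forall>A. irreducible_closed S A \<longrightarrow> (\<exists>!x. x \<in> topspace S \<and> A = S closure_of {x}))"

end

theory Submission
  imports Defs
begin

locale Lsp =
  fixes T :: "'a topology" and le :: "'a \<Rightarrow> 'a \<Rightarrow> bool"
  assumes L: "L_space T le"
begin

lemma PS: "priestley_space T le" using L unfolding L_space_def by blast
lemma ST: "stone_space T" using PS unfolding priestley_space_def by blast
lemma PO: "partial_order_on_set (topspace T) le" using PS unfolding priestley_space_def by blast
lemma refl': "x \<in> topspace T \<Longrightarrow> le x x" using PO unfolding partial_order_on_set_def by blast
lemma antisym': "x \<in> topspace T \<Longrightarrow> y \<in> topspace T \<Longrightarrow> le x y \<Longrightarrow> le y x \<Longrightarrow> x = y"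
  using PO unfolding partial_order_on_set_def by blast
lemma trans': "x \<in> topspace T \<Longrightarrow> y \<in> topspace T \<Longrightarrow> z \<in> topspace T \<Longrightarrow> le x y \<Longrightarrow> le y z \<Longrightarrow> le x z"
  using PO unfolding partial_order_on_set_def by blast
lemma sep: "x \<in> topspace T \<Longrightarrow> y \<in> topspace T \<Longrightarrow> \<not> le x y \<Longrightarrow> \<exists>U\<in>ClopUp T le. x \<in> U \<and> y \<notin> U"
  using PS unfolding priestley_space_def by blast
lemma CS: "compact_space T" using ST unfolding stone_space_def by blast
lemma basis: "openin T W \<Longrightarrow> x \<in> W \<Longrightarrow> \<exists>C. clopen_in T C \<and> x \<in> C \<and> C \<subseteq> W"
  using ST unfolding stone_space_def by blast
lemma downclopen: "clopen_in T C \<Longrightarrow> clopen_in T (down_set T le C)"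
  using L unfolding L_space_def by blast
lemma clup: "openin T U \<Longrightarrow> is_upset T le U \<Longrightarrow> openin T (T closure_of U)"
  using L unfolding L_space_def by blast

lemma CU_open: "U \<in> ClopUp T le \<Longrightarrow> openin T U" by (simp add: ClopUp_def clopen_in_def)
lemma CU_closed: "U \<in> ClopUp T le \<Longrightarrow> closedin T U" by (simp add: ClopUp_def clopen_in_def)
lemma CU_up: "U \<in> ClopUp T le \<Longrightarrow> is_upset T le U" by (simp add: ClopUp_def)
lemma CU_sub: "U \<in> ClopUp T le \<Longrightarrow> U \<subseteq> topspace T" by (simp add: ClopUp_def is_upset_def)
lemma CU_mem: "U \<in> ClopUp T le \<Longrightarrow> x \<in> U \<Longrightarrow> y \<in> topspace T \<Longrightarrow> le x y \<Longrightarrow> y \<in> U"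
  by (simp add: ClopUp_def is_upset_def)
lemma CU_top: "topspace T \<in> ClopUp T le"
  by (simp add: ClopUp_def clopen_in_def is_upset_def)
lemma CU_Int: "U \<in> ClopUp T le \<Longrightarrow> V \<in> ClopUp T le \<Longrightarrow> U \<inter> V \<in> ClopUp T le"
  by (auto simp: ClopUp_def clopen_in_def is_upset_def)
lemma CU_Un: "U \<in> ClopUp T le \<Longrightarrow> V \<in> ClopUp T le \<Longrightarrow> U \<union> V \<in> ClopUp T le"
  by (auto simp: ClopUp_def clopen_in_def is_upset_def)
lemma CU_empty: "{} \<in> ClopUp T le"
  by (auto simp: ClopUp_def clopen_in_def is_upset_def)
lemma CU_Union_finite: "finite G \<Longrightarrow> G \<subseteq> ClopUp T le \<Longrightarrow> \<Union>G \<in> ClopUp T le"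
  by (induction G rule: finite_induct) (auto intro: CU_Un CU_empty)
lemma CU_Inter_finite: "finite G \<Longrightarrow> G \<subseteq> ClopUp T le \<Longrightarrow> topspace T \<inter> \<Inter>G \<in> ClopUp T le"
proof (induction G rule: finite_induct)
  case empty then show ?case using CU_top by simp
next
  case (insert U G)
  then have "U \<inter> (topspace T \<inter> \<Inter>G) \<in> ClopUp T le" by (simp add: CU_Int)
  moreover have "U \<inter> (topspace T \<inter> \<Inter>G) = topspace T \<inter> \<Inter>(insert U G)" by auto
  ultimately show ?case by simp
qed

lemma down_closed:
  assumes x: "x \<in> topspace T"
  shows "closedin T {z \<in> topspace T. le z x}"
proof -
  have "topspace T - {z \<in> topspace T. le z x} = \<Union>{U \<in> ClopUp T le. x \<notin> U}"
  proof
    show "topspace T - {z \<in> topspace T. le z x} \<subseteq> \<Union>{U \<in> ClopUp T le. x \<notin> U}"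
      using sep[OF _ x] by blast
    show "\<Union>{U \<in> ClopUp T le. x \<notin> U} \<subseteq> topspace T - {z \<in> topspace T. le z x}"
      using CU_mem CU_sub x by blast
  qed
  moreover have "openin T (\<Union>{U \<in> ClopUp T le. x \<notin> U})" using CU_open by auto
  ultimately show ?thesis by (simp add: closedin_def)
qed

lemma closure_upset:
  assumes U: "is_upset T le U"
  shows "is_upset T le (T closure_of U)"
  unfolding is_upset_def
proof (intro conjI ballI impI)
  show "T closure_of U \<subseteq> topspace T" by (rule closure_of_subset_topspace)
  fix x y assume x: "x \<in> T closure_of U" and y: "y \<in> topspace T" and xy: "le x y"
  show "y \<in> T closure_of U"
  proof (rule ccontr)
    assume ny: "y \<notin> T closure_of U"
    have "openin T (topspace T - T closure_of U)" by auto
    then obtain C where C: "clopen_in T C" "y \<in> C" "C \<subseteq> topspace T - T closure_of U"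
      using basis[of "topspace T - T closure_of U" y] ny y by blast
    have D: "clopen_in T (down_set T le C)" using downclopen C(1) by blast
    have xT: "x \<in> topspace T" using x by (simp add: in_closure_of)
    have xD: "x \<in> down_set T le C" using C xy xT unfolding down_set_def by blast
    have "down_set T le C \<inter> U = {}"
    proof -
      { fix z assume z: "z \<in> down_set T le C" "z \<in> U"
        then obtain c where c: "c \<in> C" "le z c" unfolding down_set_def by blast
        have "c \<in> topspace T" using C(3) c by blast
        then have "c \<in> U" using U z c unfolding is_upset_def by blast
        then have False using C(3) c closure_of_subset[of U T] U unfolding is_upset_def by blast }
      then show ?thesis by blast
    qed
    then show False using x xD D unfolding in_closure_of clopen_in_def by blast
  qed
qed

lemma closure_CU:
  assumes G: "G \<subseteq> ClopUp T le"
  shows "T closure_of (\<Union>G) \<in> ClopUp T le"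
proof -
  have up: "is_upset T le (\<Union>G)" using G unfolding ClopUp_def is_upset_def by blast
  have op: "openin T (\<Union>G)" using G CU_open by blast
  show ?thesis unfolding ClopUp_def clopen_in_def
    using clup[OF op up] closure_upset[OF up] by auto
qed

lemma closure_Y:
  assumes G: "G \<subseteq> ClopUp T le" and y: "y \<in> spatial_part T le" and yc: "y \<in> T closure_of (\<Union>G)"
  shows "\<exists>U\<in>G. y \<in> U"
proof (rule ccontr)
  assume "\<not> ?thesis"
  then have no: "\<forall>U\<in>G. y \<notin> U" by blast
  have yT: "y \<in> topspace T" and dc: "clopen_in T (down_set T le {y})"
    using y unfolding spatial_part_def by auto
  have "down_set T le {y} \<inter> \<Union>G = {}"
    using no G CU_mem yT unfolding down_set_def by blast
  moreover have "y \<in> down_set T le {y}" using yT refl' unfolding down_set_def by blast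
  ultimately show False using yc dc unfolding in_closure_of clopen_in_def by blast
qed

lemma istop_spatial: "istopology (\<lambda>V. \<exists>U\<in>ClopUp T le. V = U \<inter> spatial_part T le)"
  unfolding istopology_def
proof (intro conjI allI impI)
  fix S R assume "\<exists>U\<in>ClopUp T le. S = U \<inter> spatial_part T le" "\<exists>U\<in>ClopUp T le. R = U \<inter> spatial_part T le"
  then show "\<exists>U\<in>ClopUp T le. S \<inter> R = U \<inter> spatial_part T le"
    by (metis CU_Int inf_assoc inf_commute inf_left_idem)
next
  fix K assume K: "\<forall>k\<in>K. \<exists>U\<in>ClopUp T le. k = U \<inter> spatial_part T le"
  define G where "G = {U \<in> ClopUp T le. U \<inter> spatial_part T le \<subseteq> \<Union>K}"
  have G: "G \<subseteq> ClopUp T le" unfolding G_def by blast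
  have "T closure_of (\<Union>G) \<inter> spatial_part T le = \<Union>K"
  proof
    show "T closure_of \<Union>G \<inter> spatial_part T le \<subseteq> \<Union>K"
      using closure_Y[OF G] unfolding G_def by blast
    show "\<Union>K \<subseteq> T closure_of \<Union>G \<inter> spatial_part T le"
    proof
      fix y assume "y \<in> \<Union>K"
      then obtain k U where "k \<in> K" "y \<in> k" "U \<in> ClopUp T le" "k = U \<inter> spatial_part T le" using K by blast
      then have "U \<in> G" "y \<in> U" "y \<in> spatial_part T le" unfolding G_def by auto
      then show "y \<in> T closure_of \<Union>G \<inter> spatial_part T le"
        using closure_of_subset[of "\<Union>G" T] G CU_sub by blast
    qed
  qed
  then show "\<exists>U\<in>ClopUp T le. \<Union>K = U \<inter> spatial_part T le" using closure_CU[OF G] by metis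
qed

lemma open_spatial: "openin (spatial_topology T le) V \<longleftrightarrow> (\<exists>U\<in>ClopUp T le. V = U \<inter> spatial_part T le)"
  unfolding spatial_topology_def using istop_spatial by simp

lemma Y_sub: "spatial_part T le \<subseteq> topspace T" unfolding spatial_part_def by blast

lemma top_spatial: "topspace (spatial_topology T le) = spatial_part T le"
proof -
  have "openin (spatial_topology T le) (spatial_part T le)"
    using open_spatial CU_top Y_sub by blast
  moreover have "\<forall>V. openin (spatial_topology T le) V \<longrightarrow> V \<subseteq> spatial_part T le"
    using open_spatial by blast
  ultimately show ?thesis by (meson openin_subset openin_topspace subset_antisym)
qed

lemma chain_least:
  assumes "finite S" "S \<noteq> {}" "S \<subseteq> topspace T" "\<forall>a\<in>S. \<forall>b\<in>S. le a b \<or> le b a"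
  shows "\<exists>c\<in>S. \<forall>s\<in>S. le c s"
  using assms
proof (induction S rule: finite_ne_induct)
  case (singleton a) then show ?case using refl' by auto
next
  case (insert a S)
  then obtain c where c: "c \<in> S" "\<forall>s\<in>S. le c s" by auto
  show ?case
  proof (cases "le a c")
    case True
    then show ?thesis using insert.prems c trans'[of a c] refl'[of a] by auto
  next
    case False
    then have "le c a" using insert.prems c by auto
    then show ?thesis using c by auto
  qed
qed

lemma min_below:
  assumes F: "closedin T F" and x: "x \<in> F"
  shows "\<exists>m\<in>minimal_elements le F. le m x"
proof -
  have FT: "F \<subseteq> topspace T" using F closedin_subset by blast
  define A where "A = {z \<in> F. le z x}"
  define P where "P = (\<lambda>a b. le b a)"
  have po: "partial_order_on A (relation_of P A)"
    unfolding partial_order_on_def preorder_on_def refl_on_def trans_on_def antisym_on_def relation_of_def P_def A_def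
  proof (intro conjI)
    show "{(a, b). (a, b) \<in> {z \<in> F. le z x} \<times> {z \<in> F. le z x} \<and> le b a} \<subseteq> {z \<in> F. le z x} \<times> {z \<in> F. le z x}" by auto
    show "\<forall>y\<in>{z \<in> F. le z x}. (y, y) \<in> {(a, b). (a, b) \<in> {z \<in> F. le z x} \<times> {z \<in> F. le z x} \<and> le b a}"
      using FT refl' by auto
    show "\<forall>a\<in>UNIV. \<forall>b\<in>UNIV. \<forall>c\<in>UNIV. (a, b) \<in> {(a, b). (a, b) \<in> {z \<in> F. le z x} \<times> {z \<in> F. le z x} \<and> le b a} \<longrightarrow>
        (b, c) \<in> {(a, b). (a, b) \<in> {z \<in> F. le z x} \<times> {z \<in> F. le z x} \<and> le b a} \<longrightarrow> (a, c) \<in> {(a, b). (a, b) \<in> {z \<in> F. le z x} \<times> {z \<in> F. le z x} \<and> le b a}"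
      using FT trans' by (clarsimp; meson subsetD)
    show "\<forall>a\<in>UNIV. \<forall>b\<in>UNIV. (a, b) \<in> {(a, b). (a, b) \<in> {z \<in> F. le z x} \<times> {z \<in> F. le z x} \<and> le b a} \<longrightarrow>
        (b, a) \<in> {(a, b). (a, b) \<in> {z \<in> F. le z x} \<times> {z \<in> F. le z x} \<and> le b a} \<longrightarrow> a = b"
      using FT antisym' by (clarsimp; meson subsetD)
  qed
  have ch: "\<exists>u \<in> A. \<forall>a \<in> C. P a u" if C: "C \<in> Chains (relation_of P A)" for C
  proof (cases "C = {}")
    case True
    then show ?thesis using x FT refl' unfolding A_def by auto
  next
    case False
    have CA: "C \<subseteq> A" using Chains_relation_of[OF C] .
    have chn: "\<forall>a\<in>C. \<forall>b\<in>C. le a b \<or> le b a"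
      using C unfolding Chains_def relation_of_def P_def by blast
    define U where "U = (\<lambda>c. {z \<in> topspace T. le z c} \<inter> F) ` C"
    have cl: "\<forall>D\<in>U. closedin T D"
      using CA FT down_closed F unfolding U_def A_def by blast
    have fip: "\<Inter>G \<noteq> {}" if hG: "finite G \<and> G \<subseteq> U" for G
      proof -
        obtain C' where C': "C' \<subseteq> C" "finite C'" "G = (\<lambda>c. {z \<in> topspace T. le z c} \<inter> F) ` C'"
          using hG unfolding U_def by (meson finite_subset_image)
        show ?thesis
        proof (cases "C' = {}")
          case True then show ?thesis using C' by auto
        next
          case False
          then obtain c where c: "c \<in> C'" "\<forall>s\<in>C'. le c s"
            using chain_least[of C'] C' CA FT chn unfolding A_def by blast
          then have "c \<in> \<Inter>G" using C' CA FT unfolding A_def by auto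
          then show ?thesis by blast
        qed
      qed
    have "\<Inter>U \<noteq> {}" using CS cl fip unfolding compact_space_fip by blast
    then obtain u where u: "u \<in> \<Inter>U" by blast
    obtain c0 where c0: "c0 \<in> C" using False by blast
    have uF: "u \<in> F" and uc: "\<forall>c\<in>C. le u c" and uT: "u \<in> topspace T"
      using u c0 unfolding U_def by (auto simp: \<open>C \<noteq> {}\<close>)
    have "c0 \<in> F" "le c0 x" using c0 CA unfolding A_def by auto
    then have "le u x" using trans'[of u c0 x] uT uc c0 FT x by blast
    then show ?thesis using uF uc unfolding A_def P_def by auto
  qed
  obtain m where m: "m \<in> A" "\<forall>a\<in>A. P m a \<longrightarrow> a = m"
    using predicate_Zorn[OF po ch] by blast
  have "m \<in> minimal_elements le F"
    unfolding minimal_elements_def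
  proof (intro CollectI conjI ballI impI)
    show "m \<in> F" using m unfolding A_def by auto
    fix y assume y: "y \<in> F" "le y m"
    have "m \<in> F" "le m x" using m unfolding A_def by auto
    then have "le y x" using trans'[of y m x] y FT x by blast
    then show "y = m" using m y unfolding A_def P_def by auto
  qed
  then show ?thesis using m unfolding A_def by auto
qed


lemma closure_pt_sep:
  assumes x1: "x1 \<in> spatial_part T le" and x2: "x2 \<in> spatial_part T le"
    and c: "x1 \<in> spatial_topology T le closure_of {x2}" and n: "\<not> le x1 x2"
  shows False
proof -
  have "x1 \<in> topspace T" "x2 \<in> topspace T" using x1 x2 Y_sub by auto
  then obtain U where U: "U \<in> ClopUp T le" "x1 \<in> U" "x2 \<notin> U" using sep n by blast
  have "openin (spatial_topology T le) (U \<inter> spatial_part T le)" using open_spatial U by blast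
  then show False using c U x1 unfolding in_closure_of by blast
qed

lemma T0:
  assumes x1: "x1 \<in> spatial_part T le" and x2: "x2 \<in> spatial_part T le"
    and e: "spatial_topology T le closure_of {x1} = spatial_topology T le closure_of {x2}"
  shows "x1 = x2"
proof -
  have "x1 \<in> spatial_topology T le closure_of {x1}" "x2 \<in> spatial_topology T le closure_of {x2}"
    using x1 x2 top_spatial by (auto intro: closure_of_subset[THEN subsetD])
  then have "le x1 x2" "le x2 x1" using closure_pt_sep[OF x1 x2] closure_pt_sep[OF x2 x1] e by auto
  then show ?thesis using antisym' x1 x2 Y_sub by auto
qed

lemma sober: "sober_space (spatial_topology T le)"
  unfolding sober_space_def
proof (intro allI impI)
  let ?S = "spatial_topology T le"
  let ?Y = "spatial_part T le"
  fix A assume irr: "irreducible_closed ?S A"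
  have clA: "closedin ?S A" and Ane: "A \<noteq> {}"
    and irr2: "\<And>B C. closedin ?S B \<Longrightarrow> closedin ?S C \<Longrightarrow> A = B \<union> C \<Longrightarrow> A = B \<or> A = C"
    using irr unfolding irreducible_closed_def by blast+
  have AY: "A \<subseteq> ?Y" using closedin_subset[OF clA] top_spatial by simp
  have AT: "A \<subseteq> topspace T" using AY Y_sub by blast
  have "openin ?S (?Y - A)" using clA top_spatial by (simp add: closedin_def)
  then obtain UA where UA: "UA \<in> ClopUp T le" "?Y - A = UA \<inter> ?Y" using open_spatial by blast
  have clAU: "closedin ?S (A - U)" if "U \<in> ClopUp T le" for U
  proof -
    have "closedin ?S (A - U \<inter> ?Y)" using closedin_diff[OF clA] open_spatial that by blast
    moreover have "A - U \<inter> ?Y = A - U" using AY by blast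
    ultimately show ?thesis by simp
  qed
  have bin: "U \<inter> V \<inter> A \<noteq> {}" if "U \<in> ClopUp T le" "V \<in> ClopUp T le" "U \<inter> A \<noteq> {}" "V \<inter> A \<noteq> {}" for U V
  proof
    assume "U \<inter> V \<inter> A = {}"
    then have "A = (A - U) \<union> (A - V)" by blast
    then have "A = A - U \<or> A = A - V" using irr2[OF clAU[OF that(1)] clAU[OF that(2)]] by blast
    then show False using that by blast
  qed
  define F where "F = {U \<in> ClopUp T le. U \<inter> A \<noteq> {}}"
  have fin: "(topspace T \<inter> \<Inter>G) \<inter> A \<noteq> {}" if "finite G" "G \<subseteq> F" for G
    using that
  proof (induction G rule: finite_induct)
    case empty then show ?case using Ane AT by auto
  next
    case (insert U G)
    then have "U \<inter> (topspace T \<inter> \<Inter>G) \<inter> A \<noteq> {}"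
      using bin[of U "topspace T \<inter> \<Inter>G"] CU_Inter_finite[of G] unfolding F_def by auto
    moreover have "U \<inter> (topspace T \<inter> \<Inter>G) = topspace T \<inter> \<Inter>(insert U G)" by auto
    ultimately show ?case by simp
  qed
  define CC where "CC = F \<union> {topspace T - V | V. V \<in> ClopUp T le \<and> V \<inter> A = {}}"
  have ccl: "\<forall>C\<in>CC. closedin T C"
  proof
    fix C assume "C \<in> CC"
    then consider "C \<in> F" | V where "V \<in> ClopUp T le" "C = topspace T - V" unfolding CC_def by blast
    then show "closedin T C"
    proof cases
      case 1 then show ?thesis unfolding F_def using CU_closed by blast
    next
      case 2 then show ?thesis using CU_open[OF 2(1)] by (simp add: closedin_diff)
    qed
  qed
  have cfip: "\<Inter>G \<noteq> {}" if hG: "finite G \<and> G \<subseteq> CC" for G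
  proof -
    have "finite (G \<inter> F)" "G \<inter> F \<subseteq> F" using hG by auto
    then obtain a where a: "a \<in> topspace T" "a \<in> \<Inter>(G \<inter> F)" "a \<in> A" using fin by blast
    have "a \<in> C" if C: "C \<in> G" for C
    proof -
      have "C \<in> CC" using C hG by blast
      then consider "C \<in> F" | V where "V \<in> ClopUp T le" "V \<inter> A = {}" "C = topspace T - V" unfolding CC_def by blast
      then show ?thesis
      proof cases
        case 1 then show ?thesis using a C by blast
      next
        case 2 then show ?thesis using a by blast
      qed
    qed
    then have "a \<in> \<Inter>G" by blast
    then show ?thesis by blast
  qed
  have "\<Inter>CC \<noteq> {}" using CS ccl cfip unfolding compact_space_fip by blast
  then obtain x where x: "x \<in> \<Inter>CC" by blast
  have "topspace T \<in> CC" using Ane AT CU_top unfolding CC_def F_def by blast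
  then have xT: "x \<in> topspace T" using x by blast
  have key: "x \<in> U \<longleftrightarrow> U \<inter> A \<noteq> {}" if U: "U \<in> ClopUp T le" for U
  proof
    assume "x \<in> U"
    show "U \<inter> A \<noteq> {}"
    proof
      assume "U \<inter> A = {}"
      then have "topspace T - U \<in> CC" unfolding CC_def using U by blast
      then show False using x \<open>x \<in> U\<close> by blast
    qed
  next
    assume "U \<inter> A \<noteq> {}"
    then have "U \<in> CC" unfolding CC_def F_def using U by blast
    then show "x \<in> U" using x by blast
  qed
  define W where "W = \<Union>{U \<in> ClopUp T le. U \<inter> A = {}}"
  have Wsub: "{U \<in> ClopUp T le. U \<inter> A = {}} \<subseteq> ClopUp T le" by blast
  have WT: "W \<subseteq> topspace T" unfolding W_def using CU_sub by blast
  have down: "down_set T le {x} = topspace T - W"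
  proof
    show "down_set T le {x} \<subseteq> topspace T - W"
    proof
      fix z assume z: "z \<in> down_set T le {x}"
      then have zT: "z \<in> topspace T" and zx: "le z x" unfolding down_set_def by auto
      { fix U assume U: "U \<in> ClopUp T le" "U \<inter> A = {}" "z \<in> U"
        then have "x \<in> U" using CU_mem[OF U(1) U(3) xT zx] by blast
        then have False using key U by blast }
      then show "z \<in> topspace T - W" using zT unfolding W_def by blast
    qed
    show "topspace T - W \<subseteq> down_set T le {x}"
    proof
      fix z assume z: "z \<in> topspace T - W"
      show "z \<in> down_set T le {x}"
      proof (rule ccontr)
        assume "z \<notin> down_set T le {x}"
        then have "\<not> le z x" using z unfolding down_set_def by auto
        then obtain U where "U \<in> ClopUp T le" "z \<in> U" "x \<notin> U" using sep z xT by blast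
        then show False using key z unfolding W_def by blast
      qed
    qed
  qed
  have clW: "T closure_of W \<in> ClopUp T le" using closure_CU[OF Wsub] unfolding W_def .
  have "T closure_of W \<inter> A = {}"
  proof -
    { fix a assume a: "a \<in> T closure_of W" "a \<in> A"
      then have "a \<in> ?Y" using AY by blast
      then obtain U where "U \<in> {U \<in> ClopUp T le. U \<inter> A = {}}" "a \<in> U"
        using closure_Y[OF Wsub] a unfolding W_def by blast
      then have False using a by blast }
    then show ?thesis by blast
  qed
  then have "T closure_of W \<subseteq> W" using clW unfolding W_def by blast
  then have "T closure_of W = W" using closure_of_subset[OF WT] by blast
  then have "closedin T W" by (metis closedin_closure_of)
  then have "openin T (down_set T le {x})" using down by (simp add: closedin_def)
  moreover have "closedin T (down_set T le {x})"
    using down_closed[OF xT] by (simp add: down_set_def)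
  ultimately have xY: "x \<in> ?Y" unfolding spatial_part_def clopen_in_def using xT by blast
  have Aeq: "A = ?S closure_of {x}"
  proof
    show "A \<subseteq> ?S closure_of {x}"
    proof
      fix a assume a: "a \<in> A"
      show "a \<in> ?S closure_of {x}"
        unfolding in_closure_of top_spatial
      proof (intro conjI allI impI)
        show "a \<in> ?Y" using a AY by blast
        fix Ob assume Ob: "a \<in> Ob \<and> openin ?S Ob"
        then obtain U where U: "U \<in> ClopUp T le" "Ob = U \<inter> ?Y" using open_spatial Ob by blast
        then have "a \<in> U" using Ob by blast
        then have "U \<inter> A \<noteq> {}" using a by blast
        then have "x \<in> U" using key[OF U(1)] by blast
        then show "\<exists>y. y \<in> {x} \<and> y \<in> Ob" using U xY by blast
      qed
    qed
    show "?S closure_of {x} \<subseteq> A"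
    proof
      fix y assume y: "y \<in> ?S closure_of {x}"
      show "y \<in> A"
      proof (rule ccontr)
        assume "y \<notin> A"
        moreover have yY: "y \<in> ?Y" using y top_spatial by (metis in_closure_of)
        ultimately have "y \<in> UA \<inter> ?Y" using UA by blast
        moreover have "openin ?S (UA \<inter> ?Y)" using open_spatial UA by blast
        ultimately have "\<exists>z. z \<in> {x} \<and> z \<in> UA \<inter> ?Y" using y unfolding in_closure_of by blast
        then have "x \<in> UA" by blast
        then have "UA \<inter> A \<noteq> {}" using key[OF UA(1)] by blast
        then show False using UA AY by blast
      qed
    qed
  qed
  show "\<exists>!x. x \<in> topspace ?S \<and> A = ?S closure_of {x}"
  proof (rule ex1I[of _ x])
    show "x \<in> topspace ?S \<and> A = ?S closure_of {x}" using xY Aeq unfolding top_spatial by blast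
    fix z assume z: "z \<in> topspace ?S \<and> A = ?S closure_of {z}"
    then have "z \<in> ?Y" "?S closure_of {z} = ?S closure_of {x}" using Aeq unfolding top_spatial by auto
    then show "z = x" using T0[of z x] xY by blast
  qed
qed


lemma ClopSUp_sub: "ClopSUp T le \<subseteq> ClopUp T le"
  unfolding ClopSUp_def ClopUp_def scott_upset_def by blast

lemma compact_of_scott:
  assumes V: "V \<in> ClopSUp T le"
  shows "compactin (spatial_topology T le) (V \<inter> spatial_part T le)"
  unfolding compactin_def top_spatial
proof (intro conjI allI impI)
  let ?Y = "spatial_part T le"
  show "V \<inter> ?Y \<subseteq> ?Y" by blast
  fix \<U> assume U: "(\<forall>B\<in>\<U>. openin (spatial_topology T le) B) \<and> V \<inter> ?Y \<subseteq> \<Union>\<U>"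
  then have "\<forall>B\<in>\<U>. \<exists>W. W \<in> ClopUp T le \<and> B = W \<inter> ?Y" using open_spatial by blast
  then obtain f where f: "\<forall>B\<in>\<U>. f B \<in> ClopUp T le \<and> B = f B \<inter> ?Y" by metis
  have VC: "V \<in> ClopUp T le" using V ClopSUp_sub by blast
  have Vcl: "closedin T V" using CU_closed[OF VC] .
  have Vmin: "minimal_elements le V \<subseteq> ?Y" using V unfolding ClopSUp_def scott_upset_def by blast
  have cov: "V \<subseteq> \<Union>(f ` \<U>)"
  proof
    fix v assume v: "v \<in> V"
    obtain m where m: "m \<in> minimal_elements le V" "le m v" using min_below[OF Vcl v] by blast
    have "m \<in> V" using m unfolding minimal_elements_def by blast
    then have "m \<in> V \<inter> ?Y" using m Vmin by blast
    then obtain B where B: "B \<in> \<U>" "m \<in> B" using U by blast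
    then have "m \<in> f B" "f B \<in> ClopUp T le" using f by blast+
    moreover have "v \<in> topspace T" using v CU_sub[OF VC] by blast
    ultimately have "v \<in> f B" using CU_mem m(2) by blast
    then show "v \<in> \<Union>(f ` \<U>)" using B by blast
  qed
  have "compactin T V" using closedin_compact_space[OF CS Vcl] .
  moreover have "\<forall>W\<in>f ` \<U>. openin T W" using f CU_open by blast
  ultimately obtain F' where F': "finite F'" "F' \<subseteq> f ` \<U>" "V \<subseteq> \<Union>F'"
    using cov unfolding compactin_def by meson
  then obtain G where G: "G \<subseteq> \<U>" "finite G" "F' = f ` G" by (meson finite_subset_image)
  have "V \<inter> ?Y \<subseteq> \<Union>G"
  proof
    fix y assume y: "y \<in> V \<inter> ?Y"
    then obtain B where "B \<in> G" "y \<in> f B" using F' G by blast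
    then show "y \<in> \<Union>G" using f G y by blast
  qed
  then show "\<exists>\<F>. finite \<F> \<and> \<F> \<subseteq> \<U> \<and> V \<inter> ?Y \<subseteq> \<Union>\<F>" using G by blast
qed

lemma dense_open:
  assumes SL: "SL_space T le" and V: "openin T V"
  shows "V \<subseteq> T closure_of (V \<inter> spatial_part T le)"
proof
  fix x assume x: "x \<in> V"
  have dense: "T closure_of spatial_part T le = topspace T" using SL unfolding SL_space_def by blast
  show "x \<in> T closure_of (V \<inter> spatial_part T le)"
    unfolding in_closure_of
  proof (intro conjI allI impI)
    show "x \<in> topspace T" using x V openin_subset by blast
    fix O' assume O': "x \<in> O' \<and> openin T O'"
    then have "openin T (O' \<inter> V)" "O' \<inter> V \<noteq> {}" using V x by auto
    then have "spatial_part T le \<inter> (O' \<inter> V) \<noteq> {}" using dense unfolding dense_intersects_open by blast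
    then show "\<exists>y. y \<in> V \<inter> spatial_part T le \<and> y \<in> O'" by blast
  qed
qed

lemma scott_of_compact:
  assumes SL: "SL_space T le" and V: "V \<in> ClopUp T le"
    and K: "compactin (spatial_topology T le) (V \<inter> spatial_part T le)"
  shows "V \<in> ClopSUp T le"
proof -
  let ?Y = "spatial_part T le"
  have "minimal_elements le V \<subseteq> ?Y"
  proof
    fix m assume m: "m \<in> minimal_elements le V"
    then have mV: "m \<in> V" and mmin: "\<forall>y\<in>V. le y m \<longrightarrow> y = m" unfolding minimal_elements_def by auto
    have mT: "m \<in> topspace T" using mV CU_sub[OF V] by blast
    show "m \<in> ?Y"
    proof (rule ccontr)
      assume mY: "m \<notin> ?Y"
      define \<U> where "\<U> = (\<lambda>W. W \<inter> ?Y) ` {W \<in> ClopUp T le. m \<notin> W}"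
      have op: "\<forall>B\<in>\<U>. openin (spatial_topology T le) B" unfolding \<U>_def using open_spatial by blast
      have cv: "V \<inter> ?Y \<subseteq> \<Union>\<U>"
      proof
        fix y assume y: "y \<in> V \<inter> ?Y"
        then have "\<not> le y m" using mmin mY by blast
        moreover have "y \<in> topspace T" using y Y_sub by blast
        ultimately obtain W where "W \<in> ClopUp T le" "y \<in> W" "m \<notin> W" using sep mT by blast
        then show "y \<in> \<Union>\<U>" unfolding \<U>_def using y by blast
      qed
      obtain \<G> where G: "finite \<G>" "\<G> \<subseteq> \<U>" "V \<inter> ?Y \<subseteq> \<Union>\<G>"
        using K op cv unfolding compactin_def by meson
      then obtain G' where G': "G' \<subseteq> {W \<in> ClopUp T le. m \<notin> W}" "finite G'" "\<G> = (\<lambda>W. W \<inter> ?Y) ` G'"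
        unfolding \<U>_def by (meson finite_subset_image)
      have W': "\<Union>G' \<in> ClopUp T le" using CU_Union_finite G' by blast
      have "V \<inter> ?Y \<subseteq> \<Union>G'" using G G' by blast
      then have "T closure_of (V \<inter> ?Y) \<subseteq> \<Union>G'" using closure_of_minimal CU_closed[OF W'] by blast
      then have "V \<subseteq> \<Union>G'" using dense_open[OF SL CU_open[OF V]] by blast
      then show False using mV G' by blast
    qed
  qed
  then show ?thesis using V unfolding ClopSUp_def ClopUp_def scott_upset_def clopen_in_def by blast
qed

lemma main:
  assumes SL: "SL_space T le"
  shows "algebraic_L_space T le \<longleftrightarrow>
           compactly_based (spatial_topology T le) \<and> sober_space (spatial_topology T le)"
proof
  let ?Y = "spatial_part T le"
  let ?S = "spatial_topology T le"
  assume alg: "algebraic_L_space T le"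
  have "compactly_based ?S"
    unfolding compactly_based_def
  proof (intro allI impI)
    fix Wo x assume H: "openin ?S Wo \<and> x \<in> Wo"
    then obtain U where U: "U \<in> ClopUp T le" "Wo = U \<inter> ?Y" using open_spatial by blast
    then have "x \<in> T closure_of (core T le U)" "x \<in> ?Y" using alg H unfolding algebraic_L_space_def by blast+
    moreover have sub: "{V \<in> ClopSUp T le. V \<subseteq> U} \<subseteq> ClopUp T le" using ClopSUp_sub by blast
    ultimately obtain V where V: "V \<in> ClopSUp T le" "V \<subseteq> U" "x \<in> V"
      using closure_Y[OF sub] unfolding core_def by blast
    have "openin ?S (V \<inter> ?Y)" using open_spatial V ClopSUp_sub by blast
    moreover have "compactin ?S (V \<inter> ?Y)" using compact_of_scott V by blast
    ultimately show "\<exists>K. openin ?S K \<and> compactin ?S K \<and> x \<in> K \<and> K \<subseteq> Wo"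
      using V U \<open>x \<in> ?Y\<close> by blast
  qed
  then show "compactly_based ?S \<and> sober_space ?S" using sober by blast
next
  let ?Y = "spatial_part T le"
  let ?S = "spatial_topology T le"
  assume "compactly_based ?S \<and> sober_space ?S"
  then have cb: "\<And>W x. openin ?S W \<Longrightarrow> x \<in> W \<Longrightarrow> \<exists>K. openin ?S K \<and> compactin ?S K \<and> x \<in> K \<and> K \<subseteq> W"
    unfolding compactly_based_def by blast
  have dense: "T closure_of ?Y = topspace T" using SL unfolding SL_space_def by blast
  show "algebraic_L_space T le"
    unfolding algebraic_L_space_def
  proof (intro conjI ballI subsetI)
    show "L_space T le" using L .
    fix U x assume U: "U \<in> ClopUp T le" and x: "x \<in> U"
    show "x \<in> T closure_of core T le U"
      unfolding in_closure_of
    proof (intro conjI allI impI)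
      show "x \<in> topspace T" using x CU_sub[OF U] by blast
      fix O' assume O': "x \<in> O' \<and> openin T O'"
      then have "openin T (O' \<inter> U)" "O' \<inter> U \<noteq> {}" using CU_open[OF U] x by auto
      then obtain y where y: "y \<in> ?Y" "y \<in> O'" "y \<in> U" using dense unfolding dense_intersects_open by blast
      have "openin ?S (U \<inter> ?Y)" using open_spatial U by blast
      then obtain K where K: "openin ?S K" "compactin ?S K" "y \<in> K" "K \<subseteq> U \<inter> ?Y"
        using cb y by blast
      then obtain V where V: "V \<in> ClopUp T le" "K = V \<inter> ?Y" using open_spatial by blast
      have V': "V \<inter> U \<in> ClopUp T le" using CU_Int V(1) U by blast
      have "(V \<inter> U) \<inter> ?Y = K" using V K by blast
      then have "V \<inter> U \<in> ClopSUp T le" using scott_of_compact[OF SL V'] K by simp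
      moreover have "y \<in> V \<inter> U" using V K y by blast
      ultimately have "y \<in> core T le U" unfolding core_def by blast
      then show "\<exists>y. y \<in> core T le U \<and> y \<in> O'" using y by blast
    qed
  qed
qed

end

theorem theorem4p11:
  fixes T :: "'a topology" and le :: "'a \<Rightarrow> 'a \<Rightarrow> bool"
  assumes "SL_space T le"
  shows "algebraic_L_space T le \<longleftrightarrow>
           compactly_based (spatial_topology T le) \<and> sober_space (spatial_topology T le)"
proof -
  have "L_space T le" using assms unfolding SL_space_def by blast
  then interpret Lsp T le by (rule Lsp.intro)
  show ?thesis using main[OF assms] .
qed

end
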